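(* Let $(q_0,q_1,\eta_0,\eta_1,U)$ be a restricted attack with respect to the computational basis ($\ket{v_i}=\ket{i}$), with forward isometry $\mathcal{F}$ and vectors $\ket{e},\ket{f}\in\mathcal{H}_E$ as in the context. Let $\mathcal{H}_{A_1}=\mathcal{H}_{A_2}=\mathcal{H}_B=\mathbb{C}^2$. Define the linear map $\mathbf{Rw}:\mathrm{span}\{\ket{00},\ket{11}\}\subseteq\mathcal{H}_{A_1A_2}\to\mathcal{H}_{A_1A_2E}$ by \[ \mathbf{Rw}\ket{00}=\frac{q_0\ket{0}\ket{0}\ket{0}_E+\sqrt{1-q_1^2}\ket{1}\ket{0}\ket{f}}{\sqrt{1-q_1^2+q_0^2}},\qquad \mathbf{Rw}\ket{11}=\frac{\sqrt{1-q_0^2}\ket{0}\ket{1}\ket{e}+q_1\ket{1}\ket{1}\ket{0}_E}{\sqrt{1-q_0^2+q_1^2}} \] (factors ordered $A_1A_2E$; if a denominator vanishes, the corresponding image is an arbitrary unit vector). Set $p_0=\tfrac12(1-q_1^2+q_0^2)$ and $p_1=1-p_0=\tfrac12(1-q_0^2+q_1^2)$. Consider: (SQKD, entanglement version) the state $(I_{A_1}\otimes\mathcal{F})\ket{\Phi^+}_{A_1A_2}$ with $\ket{\Phi^+}=\tfrac{1}{\sqrt2}(\ket{00}+\ket{11})$ and $\mathcal{F}$ acting $A_2\to A_2E$, tensored with $\ket{0}_B$, followed by Bob's operation $O$ on $A_2B$ ($O=I$ for Reflect, $O=\mathrm{CNOT}_{A_2\to B}$ for Measure and Resend), followed by $U$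 on $A_2E$; ($\Pi^*$) Bob prepares $\sqrt{p_0}\ket{000}_{A_1A_2B}+\sqrt{p_1}\ket{110}_{A_1A_2B}$ (Reflect) or $\sqrt{p_0}\ket{000}_{A_1A_2B}+\sqrt{p_1}\ket{111}_{A_1A_2B}$ (Measure and Resend), then $\mathbf{Rw}$ is applied to $A_1A_2$ (producing $A_1A_2E$), then $U$ is applied to $A_2E$. Then $\mathbf{Rw}$ is an isometry, and in each of the two modes (Reflect, Measure and Resend) the final pure state on $A_1A_2BE$ produced by the SQKD version equals that produced by $\Pi^*$. Consequently, if Bob chooses Measure and Resend with the same probability in both protocols, the single-round density operators $\rho_{ABE}$ (SQKD version) and $\sigma_{ABE}$ ($\Pi^*$ under the attack $(p_0,(I_{A_1}\otimes U)\mathbf{Rw})$) coincide.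
   Context: $\mathcal{H}_E$ is a finite-dimensional Hilbert space with fixed orthonormal vectors $\ket 0_E,\ket 1_E$; $\mathbb{D}=\{z\in\mathbb{C}:|z|\le1\}$. A restricted attack with respect to the computational basis is a tuple $(q_0,q_1,\eta_0,\eta_1,U)$ with $q_0,q_1\in[0,1]$, $\eta_0,\eta_1\in\mathbb{D}$ satisfying $q_0\eta_1\sqrt{1-q_1^2}+q_1\overline{\eta_0}\sqrt{1-q_0^2}=0$, and $U$ a unitary on $\mathbb{C}^2\otimes\mathcal{H}_E$. Its forward isometry is $\mathcal{F}:\mathbb{C}^2\to\mathbb{C}^2\otimes\mathcal{H}_E$, $\mathcal{F}\ket{0}=q_0\ket{0}\ket{0}_E+\sqrt{1-q_0^2}\ket{1}\ket{e}$, $\mathcal{F}\ket{1}=\sqrt{1-q_1^2}\ket{0}\ket{f}+q_1\ket{1}\ket{0}_E$, where $\ket{e}=\eta_0\ket{0}_E+\sqrt{1-|\eta_0|^2}\ket{1}_E$ and $\ket{f}=\eta_1\ket{0}_E+\sqrt{1-|\eta_1|^2}\ket{1}_E$. $\mathrm{CNOT}_{A_2\to B}\ket{t}_{A_2}\ket{b}_B=\ket{t}_{A_2}\ket{b\oplus t}_B$. *)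

theory Defs
  imports Complex_Main
begin

text \<open>Finite-dimensional Hilbert spaces are modelled as coordinate spaces
  over a finite index type: \<open>\<H>\<^sub>E\<close> is \<open>'e \<Rightarrow> complex\<close> with \<open>'e::finite\<close>;
  \<open>\<complex>\<^sup>2\<close> is indexed by \<open>bool\<close> (False = |0>, True = |1>); tensor products are
  indexed by products of index types.  Factor order A1 A2 B E.\<close>

definition cinner :: "('i::finite \<Rightarrow> complex) \<Rightarrow> ('i \<Rightarrow> complex) \<Rightarrow> complex" where
  "cinner x y = (\<Sum>i\<in>UNIV. cnj (x i) * y i)"

definition unitary_op :: "('i::finite \<Rightarrow> 'i \<Rightarrow> complex) \<Rightarrow> bool" where
  "unitary_op M \<longleftrightarrow>
     (\<forall>i j. (\<Sum>k\<in>UNIV. cnj (M k i) * M k j) = (if i = j then 1 else 0)) \<and>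
     (\<forall>i j. (\<Sum>k\<in>UNIV. M i k * cnj (M j k)) = (if i = j then 1 else 0))"

definition restricted_attack ::
  "real \<Rightarrow> real \<Rightarrow> complex \<Rightarrow> complex \<Rightarrow> (bool \<times> 'e::finite \<Rightarrow> bool \<times> 'e \<Rightarrow> complex) \<Rightarrow> bool" where
  "restricted_attack q0 q1 \<eta>0 \<eta>1 U \<longleftrightarrow>
     0 \<le> q0 \<and> q0 \<le> 1 \<and> 0 \<le> q1 \<and> q1 \<le> 1 \<and> cmod \<eta>0 \<le> 1 \<and> cmod \<eta>1 \<le> 1 \<and>
     complex_of_real q0 * \<eta>1 * complex_of_real (sqrt (1 - q1\<^sup>2))
       + complex_of_real q1 * cnj \<eta>0 * complex_of_real (sqrt (1 - q0\<^sup>2)) = 0 \<and>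
     unitary_op U"

definition ket_ef :: "complex \<Rightarrow> ('e \<Rightarrow> complex) \<Rightarrow> ('e \<Rightarrow> complex) \<Rightarrow> 'e \<Rightarrow> complex" where
  "ket_ef \<eta> e0 e1 = (\<lambda>x. \<eta> * e0 x + complex_of_real (sqrt (1 - (cmod \<eta>)\<^sup>2)) * e1 x)"

text \<open>Forward isometry \<open>\<F> : \<complex>\<^sup>2 \<rightarrow> \<complex>\<^sup>2 \<otimes> \<H>\<^sub>E\<close>, given by the images of |0>, |1>.\<close>
definition fwd :: "real \<Rightarrow> real \<Rightarrow> complex \<Rightarrow> complex \<Rightarrow> ('e \<Rightarrow> complex) \<Rightarrow> ('e \<Rightarrow> complex)
    \<Rightarrow> bool \<Rightarrow> bool \<times> 'e \<Rightarrow> complex" where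
  "fwd q0 q1 \<eta>0 \<eta>1 e0 e1 t = (\<lambda>(a, x).
     if \<not> t then (if \<not> a then complex_of_real q0 * e0 x
                  else complex_of_real (sqrt (1 - q0\<^sup>2)) * ket_ef \<eta>0 e0 e1 x)
     else (if \<not> a then complex_of_real (sqrt (1 - q1\<^sup>2)) * ket_ef \<eta>1 e0 e1 x
           else complex_of_real q1 * e0 x))"

definition phi_plus :: "bool \<times> bool \<Rightarrow> complex" where
  "phi_plus = (\<lambda>(a1, a2). if a1 = a2 then complex_of_real (1 / sqrt 2) else 0)"

definition apply_IF :: "(bool \<Rightarrow> bool \<times> 'e::finite \<Rightarrow> complex) \<Rightarrow> (bool \<times> bool \<Rightarrow> complex)
    \<Rightarrow> bool \<times> bool \<times> 'e \<Rightarrow> complex" where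
  "apply_IF F \<phi> = (\<lambda>(a1, a2, x). \<Sum>t\<in>UNIV. \<phi> (a1, t) * F t (a2, x))"

definition tensor_B0 :: "(bool \<times> bool \<times> 'e \<Rightarrow> complex) \<Rightarrow> bool \<times> bool \<times> bool \<times> 'e \<Rightarrow> complex" where
  "tensor_B0 \<psi> = (\<lambda>(a1, a2, b, x). if b then 0 else \<psi> (a1, a2, x))"

definition cnot_A2B :: "(bool \<times> bool \<times> bool \<times> 'e \<Rightarrow> complex) \<Rightarrow> bool \<times> bool \<times> bool \<times> 'e \<Rightarrow> complex" where
  "cnot_A2B \<psi> = (\<lambda>(a1, a2, b, x). \<psi> (a1, a2, b \<noteq> a2, x))"

definition apply_U_A2E :: "(bool \<times> 'e::finite \<Rightarrow> bool \<times> 'e \<Rightarrow> complex)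
    \<Rightarrow> (bool \<times> bool \<times> bool \<times> 'e \<Rightarrow> complex) \<Rightarrow> bool \<times> bool \<times> bool \<times> 'e \<Rightarrow> complex" where
  "apply_U_A2E U \<psi> = (\<lambda>(a1, a2, b, x). \<Sum>(a2', x')\<in>UNIV. U (a2, x) (a2', x') * \<psi> (a1, a2', b, x'))"

datatype mode = Reflect | MeasureResend

definition bob_op :: "mode \<Rightarrow> (bool \<times> bool \<times> bool \<times> 'e \<Rightarrow> complex) \<Rightarrow> bool \<times> bool \<times> bool \<times> 'e \<Rightarrow> complex" where
  "bob_op m = (case m of Reflect \<Rightarrow> id | MeasureResend \<Rightarrow> cnot_A2B)"

definition sqkd_final ::
  "real \<Rightarrow> real \<Rightarrow> complex \<Rightarrow> complex \<Rightarrow> (bool \<times> 'e::finite \<Rightarrow> bool \<times> 'e \<Rightarrow> complex)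
    \<Rightarrow> ('e \<Rightarrow> complex) \<Rightarrow> ('e \<Rightarrow> complex) \<Rightarrow> mode \<Rightarrow> bool \<times> bool \<times> bool \<times> 'e \<Rightarrow> complex" where
  "sqkd_final q0 q1 \<eta>0 \<eta>1 U e0 e1 m =
     apply_U_A2E U (bob_op m (tensor_B0 (apply_IF (fwd q0 q1 \<eta>0 \<eta>1 e0 e1) phi_plus)))"

text \<open>Images of |00> and |11> under \<open>Rw\<close> (states on A1 A2 E).  When a denominator
  vanishes the image is the given vector \<open>w0\<close> resp. \<open>w1\<close>.\<close>
definition Rw00 :: "real \<Rightarrow> real \<Rightarrow> complex \<Rightarrow> ('e \<Rightarrow> complex) \<Rightarrow> ('e \<Rightarrow> complex)
    \<Rightarrow> (bool \<times> bool \<times> 'e \<Rightarrow> complex) \<Rightarrow> bool \<times> bool \<times> 'e \<Rightarrow> complex" where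
  "Rw00 q0 q1 \<eta>1 e0 e1 w0 =
     (if sqrt (1 - q1\<^sup>2 + q0\<^sup>2) = 0 then w0 else
      (\<lambda>(a1, a2, x). (if a2 then 0
          else if \<not> a1 then complex_of_real q0 * e0 x
          else complex_of_real (sqrt (1 - q1\<^sup>2)) * ket_ef \<eta>1 e0 e1 x)
        / complex_of_real (sqrt (1 - q1\<^sup>2 + q0\<^sup>2))))"

definition Rw11 :: "real \<Rightarrow> real \<Rightarrow> complex \<Rightarrow> ('e \<Rightarrow> complex) \<Rightarrow> ('e \<Rightarrow> complex)
    \<Rightarrow> (bool \<times> bool \<times> 'e \<Rightarrow> complex) \<Rightarrow> bool \<times> bool \<times> 'e \<Rightarrow> complex" where
  "Rw11 q0 q1 \<eta>0 e0 e1 w1 =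
     (if sqrt (1 - q0\<^sup>2 + q1\<^sup>2) = 0 then w1 else
      (\<lambda>(a1, a2, x). (if \<not> a2 then 0
          else if \<not> a1 then complex_of_real (sqrt (1 - q0\<^sup>2)) * ket_ef \<eta>0 e0 e1 x
          else complex_of_real q1 * e0 x)
        / complex_of_real (sqrt (1 - q0\<^sup>2 + q1\<^sup>2))))"

definition rw_map :: "(bool \<times> bool \<times> 'e \<Rightarrow> complex) \<Rightarrow> (bool \<times> bool \<times> 'e \<Rightarrow> complex)
    \<Rightarrow> complex \<Rightarrow> complex \<Rightarrow> bool \<times> bool \<times> 'e \<Rightarrow> complex" where
  "rw_map R00 R11 \<alpha> \<beta> = (\<lambda>v. \<alpha> * R00 v + \<beta> * R11 v)"

definition isometry_on_span :: "(bool \<times> bool \<times> 'e::finite \<Rightarrow> complex) \<Rightarrow> (bool \<times> bool \<times> 'e \<Rightarrow> complex) \<Rightarrow> bool" where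
  "isometry_on_span R00 R11 \<longleftrightarrow>
     (\<forall>\<alpha> \<beta>. cinner (rw_map R00 R11 \<alpha> \<beta>) (rw_map R00 R11 \<alpha> \<beta>)
               = complex_of_real ((cmod \<alpha>)\<^sup>2 + (cmod \<beta>)\<^sup>2))"

text \<open>\<open>Rw\<close> applied to A1 A2 of a state on A1 A2 B whose A1 A2 part lies in
  span{|00>,|11>}, giving a state on A1 A2 B E.\<close>
definition apply_Rw :: "(bool \<times> bool \<times> 'e \<Rightarrow> complex) \<Rightarrow> (bool \<times> bool \<times> 'e \<Rightarrow> complex)
    \<Rightarrow> (bool \<times> bool \<times> bool \<Rightarrow> complex) \<Rightarrow> bool \<times> bool \<times> bool \<times> 'e \<Rightarrow> complex" where
  "apply_Rw R00 R11 \<phi> = (\<lambda>(a1, a2, b, x).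
     \<phi> (False, False, b) * R00 (a1, a2, x) + \<phi> (True, True, b) * R11 (a1, a2, x))"

definition bob_prep :: "real \<Rightarrow> real \<Rightarrow> mode \<Rightarrow> bool \<times> bool \<times> bool \<Rightarrow> complex" where
  "bob_prep p0 p1 m = (\<lambda>v.
     if v = (False, False, False) then complex_of_real (sqrt p0)
     else if v = (True, True, m = MeasureResend) then complex_of_real (sqrt p1)
     else 0)"

definition pistar_final ::
  "real \<Rightarrow> real \<Rightarrow> (bool \<times> 'e::finite \<Rightarrow> bool \<times> 'e \<Rightarrow> complex)
    \<Rightarrow> (bool \<times> bool \<times> 'e \<Rightarrow> complex) \<Rightarrow> (bool \<times> bool \<times> 'e \<Rightarrow> complex)
    \<Rightarrow> mode \<Rightarrow> bool \<times> bool \<times> bool \<times> 'e \<Rightarrow> complex" where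
  "pistar_final q0 q1 U R00 R11 m =
     apply_U_A2E U (apply_Rw R00 R11
       (bob_prep ((1 - q1\<^sup>2 + q0\<^sup>2) / 2) ((1 - q0\<^sup>2 + q1\<^sup>2) / 2) m))"

definition outer :: "('i \<Rightarrow> complex) \<Rightarrow> 'i \<Rightarrow> 'i \<Rightarrow> complex" where
  "outer \<psi> = (\<lambda>i j. \<psi> i * cnj (\<psi> j))"

definition round_density :: "real \<Rightarrow> (mode \<Rightarrow> 'i \<Rightarrow> complex) \<Rightarrow> 'i \<Rightarrow> 'i \<Rightarrow> complex" where
  "round_density r \<Psi> = (\<lambda>i j. complex_of_real r * outer (\<Psi> MeasureResend) i j
                             + complex_of_real (1 - r) * outer (\<Psi> Reflect) i j)"

end

theory Submission
  imports Defs
begin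

lemma sum_bool_prod: "(\<Sum>v\<in>(UNIV::(bool\<times>'b::finite) set). g v) = (\<Sum>p\<in>UNIV. g (False,p)) + (\<Sum>p\<in>UNIV. g (True,p))"
proof -
  have "(\<Sum>a\<in>(UNIV::bool set). \<Sum>p\<in>(UNIV::'b set). g (a,p)) = (\<Sum>z\<in>UNIV \<times> UNIV. case z of (a,p) \<Rightarrow> g (a,p))"
    by (rule sum.cartesian_product)
  also have "\<dots> = (\<Sum>v\<in>UNIV. g v)" by (simp only: UNIV_Times_UNIV case_prod_eta)
  finally have "(\<Sum>v\<in>UNIV. g v) = (\<Sum>a\<in>(UNIV::bool set). \<Sum>p\<in>(UNIV::'b set). g (a,p))" by simp
  then show ?thesis by (simp add: UNIV_bool)
qed

lemma sum_triple: "(\<Sum>v\<in>(UNIV::(bool\<times>bool\<times>'e::finite) set). g v) =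
  (\<Sum>x\<in>UNIV. g (False,False,x)) + (\<Sum>x\<in>UNIV. g (False,True,x)) + (\<Sum>x\<in>UNIV. g (True,False,x)) + (\<Sum>x\<in>UNIV. g (True,True,x))"
  by (simp only: sum_bool_prod add.assoc)

lemma cinner_triple: "cinner (u::bool\<times>bool\<times>'e::finite \<Rightarrow> complex) v =
  cinner (\<lambda>x. u(False,False,x)) (\<lambda>x. v(False,False,x)) + cinner (\<lambda>x. u(False,True,x)) (\<lambda>x. v(False,True,x))
  + cinner (\<lambda>x. u(True,False,x)) (\<lambda>x. v(True,False,x)) + cinner (\<lambda>x. u(True,True,x)) (\<lambda>x. v(True,True,x))"
  unfolding cinner_def by (rule sum_triple)

lemma cinner_scale: "cinner (\<lambda>x. c * u x) (\<lambda>x. d * v x) = cnj c * d * cinner u v"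
  unfolding cinner_def by (simp add: sum_distrib_left mult_ac)

lemma cinner_zero1: "cinner (\<lambda>x. 0) v = 0" and cinner_zero2: "cinner u (\<lambda>x. 0) = 0"
  unfolding cinner_def by simp_all

lemma cinner_add1: "cinner (\<lambda>x. u x + w x) v = cinner u v + cinner w v"
  and cinner_add2: "cinner v (\<lambda>x. u x + w x) = cinner v u + cinner v w"
  unfolding cinner_def by (simp_all add: sum.distrib algebra_simps)

lemma cinner_cnj: "cinner v u = cnj (cinner u v)"
  unfolding cinner_def by (simp add: mult.commute)

lemma ket_ef_norm:
  assumes "cinner e0 e0 = 1" "cinner e1 e1 = 1" "cinner e0 e1 = 0" "cmod \<eta> \<le> 1"
  shows "cinner (ket_ef \<eta> e0 e1) (ket_ef \<eta> e0 e1) = 1"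
proof -
  let ?c = "complex_of_real (sqrt (1 - (cmod \<eta>)\<^sup>2))"
  have e10: "cinner e1 e0 = 0" using assms(3) cinner_cnj by (metis complex_cnj_zero)
  have "cinner (ket_ef \<eta> e0 e1) (ket_ef \<eta> e0 e1) = cnj \<eta> * \<eta> + cnj ?c * ?c"
    unfolding ket_ef_def cinner_add1 cinner_add2 cinner_scale using assms e10 by simp
  also have "cnj ?c * ?c = complex_of_real (1 - (cmod \<eta>)\<^sup>2)"
  proof -
    have "(cmod \<eta>)\<^sup>2 \<le> 1" using assms(4) by (simp add: power_le_one)
    then show ?thesis by (simp flip: of_real_mult)
  qed
  also have "cnj \<eta> * \<eta> = complex_of_real ((cmod \<eta>)\<^sup>2)" by (metis complex_norm_square mult.commute)
  finally show ?thesis by (simp flip: of_real_add)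
qed

lemma iso_gen:
  assumes "cinner a a = 1" "cinner b b = 1" "cinner a b = 0"
  shows "cinner (rw_map a b \<alpha> \<beta>) (rw_map a b \<alpha> \<beta>) = complex_of_real ((cmod \<alpha>)\<^sup>2 + (cmod \<beta>)\<^sup>2)"
proof -
  have ba: "cinner b a = 0" using assms(3) cinner_cnj by (metis complex_cnj_zero)
  have "cinner (rw_map a b \<alpha> \<beta>) (rw_map a b \<alpha> \<beta>) = cnj \<alpha> * \<alpha> + cnj \<beta> * \<beta>"
    unfolding rw_map_def cinner_add1 cinner_add2 cinner_scale using assms ba by simp
  moreover have "cnj \<alpha> * \<alpha> = complex_of_real ((cmod \<alpha>)\<^sup>2)" "cnj \<beta> * \<beta> = complex_of_real ((cmod \<beta>)\<^sup>2)"
    by (metis complex_norm_square mult.commute)+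
  ultimately show ?thesis by (simp only: of_real_add)
qed



theorem theorem2:
  fixes q0 q1 :: real and \<eta>0 \<eta>1 :: complex
    and U :: "bool \<times> 'e::finite \<Rightarrow> bool \<times> 'e \<Rightarrow> complex"
    and e0 e1 :: "'e \<Rightarrow> complex"
    and w0 w1 :: "bool \<times> bool \<times> 'e \<Rightarrow> complex"
  assumes orth: "cinner e0 e0 = 1" "cinner e1 e1 = 1" "cinner e0 e1 = 0"
    and att: "restricted_attack q0 q1 \<eta>0 \<eta>1 U"
    and arb0: "sqrt (1 - q1\<^sup>2 + q0\<^sup>2) = 0 \<Longrightarrow>
                 cinner w0 w0 = 1 \<and> cinner w0 (Rw11 q0 q1 \<eta>0 e0 e1 w1) = 0"
    and arb1: "sqrt (1 - q0\<^sup>2 + q1\<^sup>2) = 0 \<Longrightarrow>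
                 cinner w1 w1 = 1 \<and> cinner (Rw00 q0 q1 \<eta>1 e0 e1 w0) w1 = 0"
  shows "isometry_on_span (Rw00 q0 q1 \<eta>1 e0 e1 w0) (Rw11 q0 q1 \<eta>0 e0 e1 w1)
    \<and> (\<forall>m. sqkd_final q0 q1 \<eta>0 \<eta>1 U e0 e1 m
            = pistar_final q0 q1 U (Rw00 q0 q1 \<eta>1 e0 e1 w0) (Rw11 q0 q1 \<eta>0 e0 e1 w1) m)
    \<and> (\<forall>r. 0 \<le> r \<and> r \<le> 1 \<longrightarrow>
         round_density r (sqkd_final q0 q1 \<eta>0 \<eta>1 U e0 e1)
         = round_density r (pistar_final q0 q1 U (Rw00 q0 q1 \<eta>1 e0 e1 w0) (Rw11 q0 q1 \<eta>0 e0 e1 w1)))"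
proof -
  define D0 where "D0 = 1 - q1\<^sup>2 + q0\<^sup>2"
  define D1 where "D1 = 1 - q0\<^sup>2 + q1\<^sup>2"
  define R00 where "R00 = Rw00 q0 q1 \<eta>1 e0 e1 w0"
  define R11 where "R11 = Rw11 q0 q1 \<eta>0 e0 e1 w1"
  define F where "F = (fwd q0 q1 \<eta>0 \<eta>1 e0 e1 :: bool \<Rightarrow> bool \<times> 'e \<Rightarrow> complex)"
  from att have q: "0 \<le> q0" "q0 \<le> 1" "0 \<le> q1" "q1 \<le> 1" "cmod \<eta>0 \<le> 1" "cmod \<eta>1 \<le> 1"
    unfolding restricted_attack_def by auto
  have q0s: "q0\<^sup>2 \<le> 1" and q1s: "q1\<^sup>2 \<le> 1" using q by (simp_all add: power_le_one)
  have D0ge: "D0 \<ge> 0" and D1ge: "D1 \<ge> 0" using q0s q1s unfolding D0_def D1_def by simp_all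
  have kf1: "cinner (ket_ef \<eta>1 e0 e1) (ket_ef \<eta>1 e0 e1) = 1" using ket_ef_norm orth q by blast
  have kf0: "cinner (ket_ef \<eta>0 e0 e1) (ket_ef \<eta>0 e0 e1) = 1" using ket_ef_norm orth q by blast
  have sq1: "complex_of_real (sqrt (1 - q1\<^sup>2)) * complex_of_real (sqrt (1 - q1\<^sup>2)) = complex_of_real (1 - q1\<^sup>2)"
    using q1s by (simp flip: of_real_mult)
  have sq0: "complex_of_real (sqrt (1 - q0\<^sup>2)) * complex_of_real (sqrt (1 - q0\<^sup>2)) = complex_of_real (1 - q0\<^sup>2)"
    using q0s by (simp flip: of_real_mult)
  have R00s: "(\<lambda>x. R00 (False,False,x)) = (\<lambda>x. complex_of_real (q0 / sqrt D0) * e0 x)"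
    "(\<lambda>x. R00 (False,True,x)) = (\<lambda>x. 0)"
    "(\<lambda>x. R00 (True,False,x)) = (\<lambda>x. complex_of_real (sqrt (1 - q1\<^sup>2) / sqrt D0) * ket_ef \<eta>1 e0 e1 x)"
    "(\<lambda>x. R00 (True,True,x)) = (\<lambda>x. 0)" if "sqrt D0 \<noteq> 0"
    using that unfolding R00_def Rw00_def D0_def by auto
  have R11s: "(\<lambda>x. R11 (False,False,x)) = (\<lambda>x. 0)"
    "(\<lambda>x. R11 (False,True,x)) = (\<lambda>x. complex_of_real (sqrt (1 - q0\<^sup>2) / sqrt D1) * ket_ef \<eta>0 e0 e1 x)"
    "(\<lambda>x. R11 (True,False,x)) = (\<lambda>x. 0)"
    "(\<lambda>x. R11 (True,True,x)) = (\<lambda>x. complex_of_real (q1 / sqrt D1) * e0 x)" if "sqrt D1 \<noteq> 0"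
    using that unfolding R11_def Rw11_def D1_def by auto
  have N00: "cinner R00 R00 = 1"
  proof (cases "sqrt D0 = 0")
    case True then show ?thesis using arb0 unfolding R00_def D0_def Rw00_def by auto
  next
    case False
    then have pos: "D0 > 0" using D0ge by auto
    have "cinner R00 R00 = complex_of_real ((q0\<^sup>2 + (1 - q1\<^sup>2)) / D0)"
      apply (subst cinner_triple)
      apply (simp only: R00s[OF False] cinner_scale cinner_zero1 orth kf1)
      using pos q1s by (simp add: power2_eq_square flip: of_real_mult of_real_add) (simp add: field_simps)
    moreover have "(q0\<^sup>2 + (1 - q1\<^sup>2)) / D0 = 1" using pos unfolding D0_def by simp
    ultimately show ?thesis by simp
  qed
  have N11: "cinner R11 R11 = 1"
  proof (cases "sqrt D1 = 0")
    case True then show ?thesis using arb1 unfolding R11_def D1_def Rw11_def by auto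
  next
    case False
    then have pos: "D1 > 0" using D1ge by auto
    have "cinner R11 R11 = complex_of_real (((1 - q0\<^sup>2) + q1\<^sup>2) / D1)"
      apply (subst cinner_triple)
      apply (simp only: R11s[OF False] cinner_scale cinner_zero1 orth kf0)
      using pos q0s by (simp add: power2_eq_square flip: of_real_mult of_real_add) (simp add: field_simps)
    moreover have "((1 - q0\<^sup>2) + q1\<^sup>2) / D1 = 1" using pos unfolding D1_def by simp
    ultimately show ?thesis by simp
  qed
  have O: "cinner R00 R11 = 0"
  proof (cases "sqrt D0 = 0")
    case True then show ?thesis using arb0 unfolding R00_def R11_def D0_def Rw00_def by auto
  next
    case F0: False
    show ?thesis
    proof (cases "sqrt D1 = 0")
      case True then show ?thesis using arb1 unfolding R00_def R11_def D1_def Rw11_def by auto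
    next
      case False
      show ?thesis
        apply (subst cinner_triple)
        by (simp only: R00s[OF F0] R11s[OF False] cinner_zero1 cinner_zero2) simp
    qed
  qed
  have iso: "isometry_on_span R00 R11"
    unfolding isometry_on_span_def using iso_gen[OF N00 N11 O] by blast
  have s2: "sqrt 2 \<noteq> 0" by simp
  have L0: "complex_of_real (sqrt (D0 / 2)) * R00 (a1,False,x) = complex_of_real (1 / sqrt 2) * F a1 (False,x)"
    and L0': "complex_of_real (sqrt (D0 / 2)) * R00 (a1,True,x) = 0" for a1 x
  proof -
    have "(complex_of_real (sqrt (D0 / 2)) * R00 (a1,False,x) = complex_of_real (1 / sqrt 2) * F a1 (False,x))
      \<and> complex_of_real (sqrt (D0 / 2)) * R00 (a1,True,x) = 0"
    proof (cases "sqrt D0 = 0")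
      case True
      then have "D0 = 0" by simp
      have "q0\<^sup>2 \<ge> 0" by simp
      then have "q0\<^sup>2 = 0" "q1\<^sup>2 = 1" using `D0 = 0` q0s q1s unfolding D0_def by linarith+
      then have "q0 = 0" "q1 = 1 \<or> q1 = -1" by (simp_all add: power2_eq_1_iff)
      then have "q0 = 0" "q1 = 1" using q by linarith+
      then show ?thesis using True by (simp add: F_def fwd_def real_sqrt_divide)
    next
      case False
      have pos: "sqrt D0 > 0" using False D0ge by simp
      have RR: "R00 = (\<lambda>(a1, a2, x). (if a2 then 0 else if \<not> a1 then complex_of_real q0 * e0 x else complex_of_real (sqrt (1 - q1\<^sup>2)) * ket_ef \<eta>1 e0 e1 x) / complex_of_real (sqrt D0))"
        using False unfolding R00_def Rw00_def D0_def by simp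
      have k: "complex_of_real (sqrt (D0/2)) * (z / complex_of_real (sqrt D0)) = complex_of_real (1 / sqrt 2) * z" for z
        using pos by (simp add: real_sqrt_divide)
      have r1: "R00 (a1,False,x) = (if \<not> a1 then complex_of_real q0 * e0 x else complex_of_real (sqrt (1 - q1\<^sup>2)) * ket_ef \<eta>1 e0 e1 x) / complex_of_real (sqrt D0)"
        and r2: "R00 (a1,True,x) = 0" unfolding RR by simp_all
      have f1: "F a1 (False,x) = (if \<not> a1 then complex_of_real q0 * e0 x else complex_of_real (sqrt (1 - q1\<^sup>2)) * ket_ef \<eta>1 e0 e1 x)"
        unfolding F_def fwd_def by simp
      show ?thesis by (simp only: r1 r2 f1 k) simp
    qed
    then show "complex_of_real (sqrt (D0 / 2)) * R00 (a1,False,x) = complex_of_real (1 / sqrt 2) * F a1 (False,x)"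
      "complex_of_real (sqrt (D0 / 2)) * R00 (a1,True,x) = 0" by auto
  qed
  have L1: "complex_of_real (sqrt (D1 / 2)) * R11 (a1,True,x) = complex_of_real (1 / sqrt 2) * F a1 (True,x)"
    and L1': "complex_of_real (sqrt (D1 / 2)) * R11 (a1,False,x) = 0" for a1 x
  proof -
    have "(complex_of_real (sqrt (D1 / 2)) * R11 (a1,True,x) = complex_of_real (1 / sqrt 2) * F a1 (True,x))
      \<and> complex_of_real (sqrt (D1 / 2)) * R11 (a1,False,x) = 0"
    proof (cases "sqrt D1 = 0")
      case True
      then have "D1 = 0" by simp
      have "q1\<^sup>2 \<ge> 0" by simp
      then have "q1\<^sup>2 = 0" "q0\<^sup>2 = 1" using `D1 = 0` q0s q1s unfolding D1_def by linarith+
      then have "q1 = 0" "q0 = 1 \<or> q0 = -1" by (simp_all add: power2_eq_1_iff)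
      then have "q1 = 0" "q0 = 1" using q by linarith+
      then show ?thesis using True by (simp add: F_def fwd_def real_sqrt_divide)
    next
      case False
      have pos: "sqrt D1 > 0" using False D1ge by simp
      have RR: "R11 = (\<lambda>(a1, a2, x). (if \<not> a2 then 0 else if \<not> a1 then complex_of_real (sqrt (1 - q0\<^sup>2)) * ket_ef \<eta>0 e0 e1 x else complex_of_real q1 * e0 x) / complex_of_real (sqrt D1))"
        using False unfolding R11_def Rw11_def D1_def by simp
      have k: "complex_of_real (sqrt (D1/2)) * (z / complex_of_real (sqrt D1)) = complex_of_real (1 / sqrt 2) * z" for z
        using pos by (simp add: real_sqrt_divide)
      have r1: "R11 (a1,True,x) = (if \<not> a1 then complex_of_real (sqrt (1 - q0\<^sup>2)) * ket_ef \<eta>0 e0 e1 x else complex_of_real q1 * e0 x) / complex_of_real (sqrt D1)"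
        and r2: "R11 (a1,False,x) = 0" unfolding RR by simp_all
      have f1: "F a1 (True,x) = (if \<not> a1 then complex_of_real (sqrt (1 - q0\<^sup>2)) * ket_ef \<eta>0 e0 e1 x else complex_of_real q1 * e0 x)"
        unfolding F_def fwd_def by simp
      show ?thesis by (simp only: r1 r2 f1 k) simp
    qed
    then show "complex_of_real (sqrt (D1 / 2)) * R11 (a1,True,x) = complex_of_real (1 / sqrt 2) * F a1 (True,x)"
      "complex_of_real (sqrt (D1 / 2)) * R11 (a1,False,x) = 0" by auto
  qed
  have IF: "apply_IF F phi_plus (a1,a2,x) = complex_of_real (1 / sqrt 2) * F a1 (a2,x)" for a1 a2 x
    unfolding apply_IF_def phi_plus_def by (cases a1) (simp_all add: UNIV_bool)
  have pre: "bob_op m (tensor_B0 (apply_IF F phi_plus))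
      = apply_Rw R00 R11 (bob_prep (D0 / 2) (D1 / 2) m)" for m
  proof (rule ext, clarify)
    fix a1 a2 b x
    show "bob_op m (tensor_B0 (apply_IF F phi_plus)) (a1, a2, b, x) =
          apply_Rw R00 R11 (bob_prep (D0 / 2) (D1 / 2) m) (a1, a2, b, x)"
      by (cases m; cases a2; cases b)
        (simp_all add: bob_op_def cnot_A2B_def tensor_B0_def IF apply_Rw_def bob_prep_def L0 L0' L1 L1')
  qed
  have st: "\<forall>m. sqkd_final q0 q1 \<eta>0 \<eta>1 U e0 e1 m = pistar_final q0 q1 U R00 R11 m"
    unfolding sqkd_final_def pistar_final_def using pre unfolding F_def D0_def D1_def by simp
  then have "sqkd_final q0 q1 \<eta>0 \<eta>1 U e0 e1 = pistar_final q0 q1 U R00 R11" by blast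
  then show ?thesis using iso st unfolding R00_def R11_def by simp
qed

end
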